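(* Let $(\mathbf{c}^*,\mathbf{y}^*,\mathbf{E}^*,\mathbf{z}^* )$ be an optimal solution to $\mathbf{IO}$ with objective value $\mathscr{D}^*$, and let $\mathscr{D}_{opt}$, $j_{opt}$ and $\mathbf{z}_{opt}$ be the results of the algorithm described in the context. Then $\mathscr{D}^*=\mathscr{D}_{opt}$.
   Context: Forward problem $\mathbf{FO}(\mathbf{c})$: maximize $\mathbf{c}'\mathbf{x}$ subject to $\mathbf{A}\mathbf{x}\ge\mathbf{b}$ (relevant constraints, rows $\mathbf{a}_j$, $j\in\{1,\dots,m_1\}$), $\mathbf{W}\mathbf{x}\ge\mathbf{q}$ (trivial constraints); feasible region nonempty, full-dimensional, no redundant constraints. Given observations $\mathbf{x}^k$, $k\in\mathcal{K}=\{1,\dots,K\}$, the multi-observation inverse optimization model $\mathbf{IO}$ is: minimize a distance measure $\mathscr{D}(\mathbf{E},\mathbf{A})\ge0$ over $\mathbf{c},\mathbf{y},\mathbf{E},\mathbf{z}$ subject to $\mathbf{A}\mathbf{z}\ge\mathbf{b}$, $\mathbf{W}\mathbf{z}\ge\mathbf{q}$, $\mathbf{c}'\mathbf{z}=\mathbf{b}'\mathbf{y}$, $\mathbf{z}=\mathbf{x}^k-\epsilon^k$ for all $k$, $\mathbf{A}'\mathbf{y}=\mathbf{c}$, $\|\mathbf{c}\|_L=1$, $\mathbf{y}\ge\mathbf{0}$ ($\mathbf{E}$ has columns $\epsilon^k$). For each $j\in\{1,\dots,m_1\}$ define $\mathbf{BIL}_j$: minimize $\mathscr{D}(\mathbf{E},\mathbf{A})$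 subject to $\mathbf{a}_j\mathbf{z}_j=b_j$, $\mathbf{A}\mathbf{z}_j\ge\mathbf{b}$, $\mathbf{W}\mathbf{z}_j\ge\mathbf{q}$, $\mathbf{z}_j=\mathbf{x}^k-\epsilon^k_j$ for all $k$. The algorithm solves $\mathbf{BIL}_j$ for every $j$ and returns $\mathscr{D}_{opt}$ = the smallest of the optimal values $\mathscr{D}^j_{opt}$, $j_{opt}$ = an index attaining it, and $\mathbf{z}_{opt}$ = the corresponding optimal point. *)

theory Defs
  imports "HOL-Analysis.Analysis"
begin

definition vge :: "real^'m \<Rightarrow> real^'m \<Rightarrow> bool" where
  "vge u v \<longleftrightarrow> (\<forall>i. u $ i \<ge> v $ i)"

definition FO_region :: "real^'n^'m \<Rightarrow> real^'m \<Rightarrow> real^'n^'p \<Rightarrow> real^'p \<Rightarrow> (real^'n) set" where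
  "FO_region A b W q = {x. vge (A *v x) b \<and> vge (W *v x) q}"

definition no_redundant_constraints ::
  "real^'n^'m \<Rightarrow> real^'m \<Rightarrow> real^'n^'p \<Rightarrow> real^'p \<Rightarrow> bool" where
  "no_redundant_constraints A b W q \<longleftrightarrow>
     (\<forall>j. {x. (\<forall>i. i \<noteq> j \<longrightarrow> (A *v x) $ i \<ge> b $ i) \<and> vge (W *v x) q} \<noteq> FO_region A b W q) \<and>
     (\<forall>l. {x. vge (A *v x) b \<and> (\<forall>i. i \<noteq> l \<longrightarrow> (W *v x) $ i \<ge> q $ i)} \<noteq> FO_region A b W q)"

definition is_norm_fun :: "(real^'n \<Rightarrow> real) \<Rightarrow> bool" where
  "is_norm_fun N \<longleftrightarrow> (\<forall>x. N x \<ge> 0) \<and> (\<forall>x. N x = 0 \<longleftrightarrow> x = 0) \<and>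
     (\<forall>a x. N (a *\<^sub>R x) = \<bar>a\<bar> * N x) \<and> (\<forall>x y. N (x + y) \<le> N x + N y)"

text \<open>Feasibility for the inverse problem IO. Observations X k, k ranging over the
  finite type 'k; E has columns \<epsilon>^k = column k E.\<close>
definition IO_feasible ::
  "real^'n^'m \<Rightarrow> real^'m \<Rightarrow> real^'n^'p \<Rightarrow> real^'p \<Rightarrow> (real^'n \<Rightarrow> real) \<Rightarrow> ('k \<Rightarrow> real^'n)
   \<Rightarrow> real^'n \<Rightarrow> real^'m \<Rightarrow> real^'k^'n \<Rightarrow> real^'n \<Rightarrow> bool" where
  "IO_feasible A b W q N X c y E z \<longleftrightarrow>
     vge (A *v z) b \<and> vge (W *v z) q \<and> c \<bullet> z = b \<bullet> y \<and>
     (\<forall>k. z = X k - column k E) \<and> transpose A *v y = c \<and> N c = 1 \<and> vge y 0"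

definition IO_optimal ::
  "(real^'k^'n \<Rightarrow> real^'n^'m \<Rightarrow> real) \<Rightarrow>
   real^'n^'m \<Rightarrow> real^'m \<Rightarrow> real^'n^'p \<Rightarrow> real^'p \<Rightarrow> (real^'n \<Rightarrow> real) \<Rightarrow> ('k \<Rightarrow> real^'n)
   \<Rightarrow> real^'n \<Rightarrow> real^'m \<Rightarrow> real^'k^'n \<Rightarrow> real^'n \<Rightarrow> bool" where
  "IO_optimal D A b W q N X c y E z \<longleftrightarrow>
     IO_feasible A b W q N X c y E z \<and>
     (\<forall>c' y' E' z'. IO_feasible A b W q N X c' y' E' z' \<longrightarrow> D E A \<le> D E' A)"

definition BIL_feasible ::
  "real^'n^'m \<Rightarrow> real^'m \<Rightarrow> real^'n^'p \<Rightarrow> real^'p \<Rightarrow> ('k \<Rightarrow> real^'n) \<Rightarrow> 'm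
   \<Rightarrow> real^'k^'n \<Rightarrow> real^'n \<Rightarrow> bool" where
  "BIL_feasible A b W q X j E z \<longleftrightarrow>
     (A $ j) \<bullet> z = b $ j \<and> vge (A *v z) b \<and> vge (W *v z) q \<and> (\<forall>k. z = X k - column k E)"

definition BIL_value ::
  "(real^'k^'n \<Rightarrow> real^'n^'m \<Rightarrow> real) \<Rightarrow>
   real^'n^'m \<Rightarrow> real^'m \<Rightarrow> real^'n^'p \<Rightarrow> real^'p \<Rightarrow> ('k \<Rightarrow> real^'n) \<Rightarrow> 'm \<Rightarrow> real" where
  "BIL_value D A b W q X j = Inf {D E A | E z. BIL_feasible A b W q X j E z}"

definition D_opt ::
  "(real^'k^'n \<Rightarrow> real^'n^'m \<Rightarrow> real) \<Rightarrow>
   real^'n^'m \<Rightarrow> real^'m \<Rightarrow> real^'n^'p \<Rightarrow> real^'p \<Rightarrow> ('k \<Rightarrow> real^'n) \<Rightarrow> real" where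
  "D_opt D A b W q X = (MIN j. BIL_value D A b W q X j)"

end

theory Submission
  imports Defs
begin

lemma row_nonzero:
  fixes A :: "real^'n^'m"
  assumes nonempty: "FO_region A b W q \<noteq> {}"
    and nonred: "no_redundant_constraints A b W q"
  shows "A $ j \<noteq> 0"
proof
  assume a0: "A $ j = 0"
  obtain x0 where x0: "x0 \<in> FO_region A b W q" using nonempty by blast
  have bj: "b $ j \<le> 0" using x0 a0 by (auto simp: FO_region_def vge_def matrix_vector_mul_component dest: spec[of _ j])
  have "{x. (\<forall>i. i \<noteq> j \<longrightarrow> (A *v x) $ i \<ge> b $ i) \<and> vge (W *v x) q} = FO_region A b W q"
    unfolding FO_region_def vge_def
    using bj a0 by (auto simp: matrix_vector_mul_component) (metis inner_zero_left)
  with nonred show False unfolding no_redundant_constraints_def by blast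
qed

lemma BIL_nonempty:
  fixes A :: "real^'n^'m"
  assumes nonempty: "FO_region A b W q \<noteq> {}"
    and nonred: "no_redundant_constraints A b W q"
  shows "\<exists>z. z \<in> FO_region A b W q \<and> A $ j \<bullet> z = b $ j"
proof -
  obtain x0 where x0: "x0 \<in> FO_region A b W q" using nonempty by blast
  let ?S = "{x. (\<forall>i. i \<noteq> j \<longrightarrow> (A *v x) $ i \<ge> b $ i) \<and> vge (W *v x) q}"
  have sub: "FO_region A b W q \<subseteq> ?S" by (auto simp: FO_region_def vge_def)
  have "?S \<noteq> FO_region A b W q" using nonred unfolding no_redundant_constraints_def by blast
  then obtain x where xS: "x \<in> ?S" and xn: "x \<notin> FO_region A b W q" using sub by blast
  have xj: "A $ j \<bullet> x < b $ j"
  proof (rule ccontr)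
    assume "\<not> A $ j \<bullet> x < b $ j"
    then have "vge (A *v x) b" using xS by (auto simp: vge_def matrix_vector_mul_component) (metis not_le)
    with xS xn show False by (auto simp: FO_region_def)
  qed
  have x0A: "\<And>i. A $ i \<bullet> x0 \<ge> b $ i" and x0W: "\<And>i. W $ i \<bullet> x0 \<ge> q $ i"
    using x0 by (auto simp: FO_region_def vge_def matrix_vector_mul_component)
  have xA: "\<And>i. i \<noteq> j \<Longrightarrow> A $ i \<bullet> x \<ge> b $ i" and xW: "\<And>i. W $ i \<bullet> x \<ge> q $ i"
    using xS by (auto simp: vge_def matrix_vector_mul_component)
  define \<alpha> where "\<alpha> = A $ j \<bullet> x0 - b $ j"
  define \<beta> where "\<beta> = b $ j - A $ j \<bullet> x"
  have a0: "\<alpha> \<ge> 0" using x0A[of j] by (simp add: \<alpha>_def)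
  have b0: "\<beta> > 0" using xj by (simp add: \<beta>_def)
  define t where "t = \<alpha> / (\<alpha> + \<beta>)"
  have t0: "0 \<le> t" and t1: "t \<le> 1" using a0 b0 by (auto simp: t_def)
  define z where "z = (1 - t) *\<^sub>R x0 + t *\<^sub>R x"
  have lin: "\<And>r. r \<bullet> z = (1 - t) * (r \<bullet> x0) + t * (r \<bullet> x)"
    by (simp add: z_def inner_add_right)
  have cvx: "\<And>u v w::real. u \<ge> w \<Longrightarrow> v \<ge> w \<Longrightarrow> (1 - t) * u + t * v \<ge> w"
  proof -
    fix u v w :: real assume "u \<ge> w" "v \<ge> w"
    then have "(1 - t) * u \<ge> (1 - t) * w" "t * v \<ge> t * w"
      using t0 t1 by (auto intro: mult_left_mono)
    then show "(1 - t) * u + t * v \<ge> w" by (simp add: algebra_simps)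
  qed
  have zj: "A $ j \<bullet> z = b $ j"
  proof -
    have "A $ j \<bullet> z = (1 - t) * (b $ j + \<alpha>) + t * (b $ j - \<beta>)"
      unfolding lin by (simp add: \<alpha>_def \<beta>_def)
    also have "\<dots> = b $ j + \<alpha> - t * (\<alpha> + \<beta>)" by (simp add: algebra_simps)
    also have "t * (\<alpha> + \<beta>) = \<alpha>" using a0 b0 by (simp add: t_def)
    finally show ?thesis by simp
  qed
  have "z \<in> FO_region A b W q"
    unfolding FO_region_def vge_def matrix_vector_mul_component
  proof (intro CollectI conjI allI)
    fix i show "b $ i \<le> A $ i \<bullet> z"
    proof (cases "i = j")
      case True then show ?thesis using zj by simp
    next
      case False then show ?thesis unfolding lin using cvx x0A xA by blast
    qed
  next
    fix i show "q $ i \<le> W $ i \<bullet> z" unfolding lin using cvx x0W xW by blast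
  qed
  with zj show ?thesis by blast
qed

lemma BIL_to_IO:
  fixes A :: "real^'n^'m"
  assumes anz: "A $ j \<noteq> 0" and norm: "is_norm_fun N"
    and bf: "BIL_feasible A b W q X j E z"
  shows "\<exists>c y. IO_feasible A b W q N X c y E z"
proof -
  define n where "n = N (A $ j)"
  have "n \<ge> 0" "n \<noteq> 0" using norm anz unfolding is_norm_fun_def n_def by auto
  then have npos: "n > 0" by simp
  define c where "c = (1 / n) *\<^sub>R A $ j"
  define y :: "real^'m" where "y = (\<chi> l. if l = j then 1 / n else 0)"
  have "N c = \<bar>1/n\<bar> * N (A $ j)" unfolding c_def using norm is_norm_fun_def by blast
  then have Nc: "N c = 1" using npos n_def by simp
  have cz: "c \<bullet> z = b \<bullet> y"
    using bf by (simp add: c_def y_def BIL_feasible_def inner_vec_def if_distrib sum_divide_distrib[symmetric] cong: if_cong)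
  have Ty: "transpose A *v y = c"
    by (simp add: vec_eq_iff matrix_vector_mult_def transpose_def y_def c_def if_distrib cong: if_cong)
  have y0: "vge y 0" using npos by (simp add: vge_def y_def)
  show ?thesis using bf Nc cz Ty y0 unfolding IO_feasible_def BIL_feasible_def by blast
qed

theorem theorem1:
  fixes A :: "real^'n^'m" and b :: "real^'m"
    and W :: "real^'n^'p" and q :: "real^'p"
    and N :: "real^'n \<Rightarrow> real"
    and X :: "'k::finite \<Rightarrow> real^'n"
    and D :: "real^'k^'n \<Rightarrow> real^'n^'m \<Rightarrow> real"
    and cs :: "real^'n" and ys :: "real^'m" and Es :: "real^'k^'n" and zs :: "real^'n"
  assumes nonempty: "FO_region A b W q \<noteq> {}"
    and fulldim: "interior (FO_region A b W q) \<noteq> {}"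
    and nonred: "no_redundant_constraints A b W q"
    and norm: "is_norm_fun N"
    and Dnonneg: "\<And>E. D E A \<ge> 0"
    and opt: "IO_optimal D A b W q N X cs ys Es zs"
  shows "D Es A = D_opt D A b W q X"
proof -
  let ?S = "\<lambda>j. {D E A | E z. BIL_feasible A b W q X j E z}"
  have bdd: "bdd_below (?S j)" for j by (rule bdd_belowI[of _ 0]) (auto simp: Dnonneg)
  have ne: "?S j \<noteq> {}" for j
  proof -
    obtain z where z: "z \<in> FO_region A b W q" "A $ j \<bullet> z = b $ j"
      using BIL_nonempty[OF nonempty nonred] by blast
    define E :: "real^'k^'n" where "E = (\<chi> i k. (X k - z) $ i)"
    have "BIL_feasible A b W q X j E z"
      using z by (simp add: BIL_feasible_def FO_region_def E_def column_def vec_eq_iff)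
    then show ?thesis by blast
  qed
  have low: "D Es A \<le> BIL_value D A b W q X j" for j
    unfolding BIL_value_def
  proof (rule cInf_greatest[OF ne])
    fix d assume "d \<in> ?S j"
    then obtain E z where d: "d = D E A" and bf: "BIL_feasible A b W q X j E z" by blast
    obtain c y where "IO_feasible A b W q N X c y E z"
      using BIL_to_IO[OF row_nonzero[OF nonempty nonred] norm bf] by blast
    then show "D Es A \<le> d" using opt d unfolding IO_optimal_def by blast
  qed
  have feas: "IO_feasible A b W q N X cs ys Es zs" using opt by (simp add: IO_optimal_def)
  have "\<exists>j. ys $ j > 0"
  proof (rule ccontr)
    assume "\<not> ?thesis"
    then have "ys = 0" using feas by (auto simp: IO_feasible_def vge_def vec_eq_iff) (metis less_eq_real_def)
    then have "cs = 0" using feas by (simp add: IO_feasible_def)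
    then show False using feas norm unfolding IO_feasible_def is_norm_fun_def by (metis zero_neq_one)
  qed
  then obtain j0 where yj: "ys $ j0 > 0" by blast
  have "A $ j0 \<bullet> zs = b $ j0"
  proof -
    have cz: "cs \<bullet> zs = b \<bullet> ys" and Ty: "transpose A *v ys = cs"
      using feas by (auto simp: IO_feasible_def)
    have "cs \<bullet> zs = ys \<bullet> (A *v zs)"
      using Ty by (metis transpose_matrix_vector dot_lmul_matrix)
    then have "ys \<bullet> (A *v zs - b) = 0" using cz by (simp add: inner_diff_right inner_commute)
    then have s0: "(\<Sum>i\<in>UNIV. ys $ i * ((A *v zs) $ i - b $ i)) = 0"
      by (simp add: inner_vec_def)
    have nn: "\<And>i. i\<in>UNIV \<Longrightarrow> 0 \<le> ys $ i * ((A *v zs) $ i - b $ i)"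
      using feas by (auto simp: IO_feasible_def vge_def)
    have "ys $ j0 * ((A *v zs) $ j0 - b $ j0) = 0"
    proof -
      have "(\<Sum>i\<in>UNIV. ys $ i * ((A *v zs) $ i - b $ i)) = 0 \<longleftrightarrow> (\<forall>i\<in>UNIV. ys $ i * ((A *v zs) $ i - b $ i) = 0)"
        by (rule sum_nonneg_eq_0_iff[OF finite nn])
      with s0 show ?thesis by simp
    qed
    then show ?thesis using yj by (simp add: matrix_vector_mul_component)
  qed
  then have "BIL_feasible A b W q X j0 Es zs"
    using feas by (simp add: BIL_feasible_def IO_feasible_def)
  then have "D Es A \<in> ?S j0" by blast
  then have up: "BIL_value D A b W q X j0 \<le> D Es A"
    unfolding BIL_value_def by (rule cInf_lower[OF _ bdd])
  have "D_opt D A b W q X = Min (range (BIL_value D A b W q X))"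
    by (simp add: D_opt_def)
  also have "\<dots> = D Es A"
  proof (rule antisym)
    show "Min (range (BIL_value D A b W q X)) \<le> D Es A"
    proof -
      have "Min (range (BIL_value D A b W q X)) \<le> BIL_value D A b W q X j0"
        by (rule Min_le) auto
      with up show ?thesis by linarith
    qed
    show "D Es A \<le> Min (range (BIL_value D A b W q X))"
      using low by (simp add: Min_ge_iff)
  qed
  finally show ?thesis by simp
qed

end
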